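(* Let $n\ge 3$, $i\ge 0$, $1\le k\le n$, and $x^\Lambda\partial_k\in\mathcal{B}$. Then $x^\Lambda\partial_k\in\mathcal{L}_i\cap\mathcal{B}_k$ if and only if both of the following hold: (a) $n-k\le \mathrm{WD}(x^\Lambda\partial_k)<r_i$; (b) $i=\mathrm{lev}_i(x^\Lambda\partial_k)$.
   Context: Fix an integer $n\ge 3$. A partition is a sequence $\Lambda=(\lambda_j)_{j\ge1}$ of non-negative integers with finite support; $\mathrm{wt}(\Lambda)=\sum_j j\lambda_j$; $\mathrm{Part}(k)$ is the set of partitions with $\lambda_j=0$ for $j>k$. Write $x^\Lambda=\prod_j x_j^{\lambda_j}$, $\deg(x^\Lambda)=\sum_j\lambda_j$. $\mathcal{B}=\{x^\Lambda\partial_k : 1\le k\le n,\ \Lambda\in\mathrm{Part}(k-1)\}$ and $\mathcal{B}_u=\{x^\Lambda\partial_k\in\mathcal{B}: k=u\}$. For an integer $i\ge-1$, let $r_i\in\{1,\dots,n-1\}$ with $i\equiv r_i\pmod{n-1}$ and $h_i=\lfloor (i-1)/(n-1)\rfloor+1$. Define $\mathrm{WD}(x^\Lambda\partial_k)=\mathrm{wt}(\Lambda)-\deg(x^\Lambda)+n-k$ and $\mathrm{lev}_i(x^\Lambda\partial_k)=h_i\,\mathrm{WD}(x^\Lambda\partial_k)+\deg(x^\Lambda)-1$. For $i\ge-1$, $\mathcal{N}_i=\{b\in\mathcal{B}: \mathrm{lev}_j(b)\le j\text{ for some integer } -1\le j\le i\}$, and $\mathcal{L}_i=\mathcal{N}_i\setminus\mathcal{N}_{i-1}$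 for $i\ge0$. *)

theory Defs
  imports Main
begin

text \<open>A partition is a sequence (lambda_j)_{j>=1} of naturals with finite support; we model it
  as a function nat => nat whose value at index 0 is irrelevant and required to be 0.
  A basis element x^Lambda d_k is modelled as the pair (Lambda, k).\<close>

type_synonym partition = "nat \<Rightarrow> nat"
type_synonym basis_elt = "partition \<times> nat"

definition Part :: "nat \<Rightarrow> partition set" where
  "Part k = {\<Lambda>. \<forall>j. (j = 0 \<or> k < j) \<longrightarrow> \<Lambda> j = 0}"

definition wt :: "partition \<Rightarrow> nat" where
  "wt \<Lambda> = (\<Sum>j\<in>{j. \<Lambda> j \<noteq> 0}. j * \<Lambda> j)"

definition deg :: "partition \<Rightarrow> nat" where
  "deg \<Lambda> = (\<Sum>j\<in>{j. \<Lambda> j \<noteq> 0}. \<Lambda> j)"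

definition BB :: "nat \<Rightarrow> basis_elt set" where
  "BB n = {(\<Lambda>, k). 1 \<le> k \<and> k \<le> n \<and> \<Lambda> \<in> Part (k - 1)}"

definition BB_u :: "nat \<Rightarrow> nat \<Rightarrow> basis_elt set" where
  "BB_u n u = {b \<in> BB n. snd b = u}"

definition r_idx :: "nat \<Rightarrow> int \<Rightarrow> int" where
  "r_idx n i = (i - 1) mod (int n - 1) + 1"

definition h_idx :: "nat \<Rightarrow> int \<Rightarrow> int" where
  "h_idx n i = (i - 1) div (int n - 1) + 1"

definition WD :: "nat \<Rightarrow> basis_elt \<Rightarrow> int" where
  "WD n b = int (wt (fst b)) - int (deg (fst b)) + int n - int (snd b)"

definition lev :: "nat \<Rightarrow> int \<Rightarrow> basis_elt \<Rightarrow> int" where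
  "lev n i b = h_idx n i * WD n b + int (deg (fst b)) - 1"

definition NN :: "nat \<Rightarrow> int \<Rightarrow> basis_elt set" where
  "NN n i = {b \<in> BB n. \<exists>j::int. -1 \<le> j \<and> j \<le> i \<and> lev n j b \<le> j}"

definition LL :: "nat \<Rightarrow> int \<Rightarrow> basis_elt set" where
  "LL n i = NN n i - NN n (i - 1)"

end

theory Submission
  imports Defs
begin

lemma divq: fixes a b m :: int assumes "0 \<le> b" "b < m" shows "(a*m + b) div m = a"
proof -
  have "m > 0" using assms by simp
  then have "(b + a*m) div m = b div m + a" by simp
  then show ?thesis using assms by (simp add: add.commute)
qed

lemma key:
  fixes m W d i :: int
  assumes m2: "m \<ge> 2" and i0: "i \<ge> 0" and d1: "d = 1 \<longrightarrow> W \<le> m - 1" and W0: "W \<ge> 0"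
  shows "((\<exists>j. -1 \<le> j \<and> j \<le> i \<and> ((j-1) div m + 1) * W + d - 1 \<le> j) \<and>
          \<not>(\<exists>j. -1 \<le> j \<and> j \<le> i - 1 \<and> ((j-1) div m + 1) * W + d - 1 \<le> j))
     \<longleftrightarrow> (W < (i-1) mod m + 1 \<and> i = ((i-1) div m + 1) * W + d - 1)"
    (is "?L \<longleftrightarrow> ?R")
proof -
  define q where "q = (i-1) div m"
  define s where "s = (i-1) mod m"
  have ieq: "i - 1 = q*m + s" using q_def s_def by simp
  have s0: "0 \<le> s" "s < m" using s_def m2 by auto
  have qge: "q \<ge> -1"
  proof (rule ccontr)
    assume "\<not> q \<ge> -1" then have "q \<le> -2" by simp
    then have "q*m \<le> (-2)*m" using m2 mult_right_mono[of q "-2" m] by simp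
    then show False using ieq s0 i0 m2 by linarith
  qed
  show ?thesis
  proof
    assume L: ?L
    then obtain j where j: "-1 \<le> j" "j \<le> i" "((j-1) div m + 1) * W + d - 1 \<le> j" by blast
    have ji: "j = i"
    proof (rule ccontr)
      assume "j \<noteq> i" then have "j \<le> i - 1" using j by simp
      then show False using L j by blast
    qed
    have Pi: "(q+1)*W + d - 1 \<le> i" using j ji q_def by simp
    have nP: "\<And>j. -1 \<le> j \<Longrightarrow> j \<le> i - 1 \<Longrightarrow> ((j-1) div m + 1) * W + d - 1 > j"
      using L by (meson not_le)
    have eq: "i = (q+1)*W + d - 1"
    proof (cases "s \<ge> 1")
      case True
      have "i-1-1 = q*m + (s-1)" using ieq by simp
      then have "(i-1-1) div m = q" using divq[of "s-1" m q] True s0 by (simp add: algebra_simps)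
      then show ?thesis using nP[of "i-1"] i0 Pi by simp
    next
      case False
      then have s00: "s = 0" using s0 by simp
      have "i-1-1 = (q-1)*m + (m-1)" using ieq s00 by (simp add: algebra_simps)
      then have "(i-1-1) div m = ((q-1)*m + (m-1)) div m" by (simp only:)
      also have "\<dots> = q - 1" using divq[of "m-1" m "q-1"] m2 by simp
      finally have "(i-1-1) div m = q - 1" .
      then have A: "q*W + d - 1 > i - 1" using nP[of "i-1"] i0 by simp
      have "W \<le> 0" using A Pi ieq s00 by (simp add: algebra_simps)
      then have "W = 0" using W0 by simp
      then show ?thesis using A Pi by (simp add: algebra_simps)
    qed
    have "W < s + 1"
    proof (rule ccontr)
      assume "\<not> W < s + 1"
      then have Ws: "W \<ge> s + 1" by simp
      show False
      proof (cases "q = -1")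
        case True
        then have "i = 0" using ieq s0 i0 by simp
        then have "d = 1" using eq True by simp
        then show False using d1 Ws True ieq s0 \<open>i = 0\<close> by simp
      next
        case False
        then have q0: "q \<ge> 0" using qge by simp
        define j where "j = q*m"
        have "j - 1 = (q-1)*m + (m-1)" using j_def by (simp add: algebra_simps)
        then have "(j-1) div m = ((q-1)*m + (m-1)) div m" by (simp only:)
        also have "\<dots> = q - 1" using divq[of "m-1" m "q-1"] m2 by simp
        finally have "(j-1) div m = q - 1" .
        moreover have "j \<le> i - 1" using j_def ieq s0 by simp
        moreover have "-1 \<le> j"
        proof -
          have "0 \<le> q * m" using q0 m2 by simp
          then show ?thesis using j_def by linarith
        qed
        moreover have "q*W + d - 1 \<le> j" using eq Ws j_def ieq by (simp add: algebra_simps)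
        ultimately show False using nP[of j] by simp
      qed
    qed
    then show ?R using eq unfolding q_def[symmetric] s_def[symmetric] by simp
  next
    assume R: ?R
    then have Ws: "W < s + 1" and eq: "i = (q+1)*W + d - 1" unfolding q_def[symmetric] s_def[symmetric] by auto
    have "\<not>(\<exists>j. -1 \<le> j \<and> j \<le> i - 1 \<and> ((j-1) div m + 1) * W + d - 1 \<le> j)"
    proof
      assume "\<exists>j. -1 \<le> j \<and> j \<le> i - 1 \<and> ((j-1) div m + 1) * W + d - 1 \<le> j"
      then obtain j where j: "-1 \<le> j" "j \<le> i - 1" "((j-1) div m + 1) * W + d - 1 \<le> j" by blast
      define q' where "q' = (j-1) div m"
      define s' where "s' = (j-1) mod m"
      have jeq: "j - 1 = q'*m + s'" using q'_def s'_def by simp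
      have s'0: "0 \<le> s'" "s' < m" using s'_def m2 by auto
      have "q' \<le> q" unfolding q'_def q_def using j m2 by (simp add: zdiv_mono1)
      have Pj: "(q'+1)*W + d - 1 \<le> j" using j(3) unfolding q'_def[symmetric] .
      show False
      proof (cases "q' = q")
        case True
        then show False using j(2) Pj eq by simp
      next
        case False
        then have "q - q' - 1 \<ge> 0" using \<open>q' \<le> q\<close> by simp
        moreover have "m - W > 0" using Ws s0 by simp
        ultimately have "(q - q' - 1) * (m - W) \<ge> 0" by simp
        then have X: "q*m - q*W - q'*m + q'*W - m + W \<ge> 0" by (simp add: algebra_simps)
        have Y: "q'*W + W + d - 1 \<le> j" using Pj by (simp add: algebra_simps)
        have Z: "i = q*W + W + d - 1" using eq by (simp add: algebra_simps)
        show False using X Y Z jeq ieq Ws s'0 by linarith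
      qed
    qed
    moreover have "\<exists>j. -1 \<le> j \<and> j \<le> i \<and> ((j-1) div m + 1) * W + d - 1 \<le> j"
    proof -
      have "((i-1) div m + 1)*W + d - 1 \<le> i" using R by linarith
      then show ?thesis using i0 by (intro exI[of _ i]) simp
    qed
    ultimately show ?L by blast
  qed
qed

lemma part_bounds:
  assumes "\<Lambda> \<in> Part K"
  shows "deg \<Lambda> \<le> wt \<Lambda>" "wt \<Lambda> \<le> K * deg \<Lambda>"
proof -
  let ?S = "{j. \<Lambda> j \<noteq> 0}"
  have sub: "?S \<subseteq> {1..K}"
  proof
    fix j assume "j \<in> ?S"
    then have "\<Lambda> j \<noteq> 0" by simp
    have A: "\<forall>j. (j = 0 \<or> K < j) \<longrightarrow> \<Lambda> j = 0" using assms unfolding Part_def by (simp only: mem_Collect_eq)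
    have "\<Lambda> 0 = 0" using A by simp
    then have "j \<noteq> 0" using \<open>\<Lambda> j \<noteq> 0\<close> by (cases "j = 0") simp_all
    moreover have "\<not> K < j" using A[rule_format, of j] \<open>\<Lambda> j \<noteq> 0\<close> by (cases "K < j") simp_all
    ultimately show "j \<in> {1..K}" by simp
  qed
  have fin: "finite ?S" using finite_subset[OF sub] by simp
  have "(\<Sum>j\<in>?S. \<Lambda> j) \<le> (\<Sum>j\<in>?S. j * \<Lambda> j)"
  proof (rule sum_mono)
    fix j assume "j \<in> ?S"
    then have "1 \<le> j" using sub by auto
    then show "\<Lambda> j \<le> j * \<Lambda> j" using mult_right_mono[of 1 j "\<Lambda> j"] by simp
  qed
  then show "deg \<Lambda> \<le> wt \<Lambda>" unfolding deg_def wt_def .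
  have "(\<Sum>j\<in>?S. j * \<Lambda> j) \<le> (\<Sum>j\<in>?S. K * \<Lambda> j)"
  proof (rule sum_mono)
    fix j assume "j \<in> ?S"
    then have "j \<le> K" using sub by auto
    then show "j * \<Lambda> j \<le> K * \<Lambda> j" by (rule mult_right_mono) simp
  qed
  also have "\<dots> = K * (\<Sum>j\<in>?S. \<Lambda> j)" by (simp add: sum_distrib_left)
  finally show "wt \<Lambda> \<le> K * deg \<Lambda>" unfolding deg_def wt_def .
qed

theorem theorem2p15:
  fixes n k :: nat and i :: int and \<Lambda> :: partition
  assumes "3 \<le> n" and "0 \<le> i" and "1 \<le> k" and "k \<le> n"
    and "(\<Lambda>, k) \<in> BB n"
  shows "(\<Lambda>, k) \<in> LL n i \<inter> BB_u n k \<longleftrightarrow>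
           (int n - int k \<le> WD n (\<Lambda>, k) \<and> WD n (\<Lambda>, k) < r_idx n i)
         \<and> i = lev n i (\<Lambda>, k)"
proof -
  define m where "m = int n - 1"
  define W where "W = WD n (\<Lambda>, k)"
  define d where "d = int (deg \<Lambda>)"
  have P: "\<Lambda> \<in> Part (k - 1)" using assms(5) unfolding BB_def by simp
  note pb = part_bounds[OF P]
  have W1: "int n - int k \<le> W" using pb(1) unfolding W_def WD_def by simp
  have W0: "W \<ge> 0" using W1 assms(4) by simp
  have m2: "m \<ge> 2" using assms(1) m_def by simp
  have d1: "d = 1 \<longrightarrow> W \<le> m - 1"
  proof
    assume "d = 1"
    then have "deg \<Lambda> = 1" using d_def by simp
    then have "wt \<Lambda> \<le> k - 1" using pb(2) by simp
    then show "W \<le> m - 1" using assms(3,4) \<open>deg \<Lambda> = 1\<close> unfolding W_def WD_def m_def by simp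
  qed
  have lev: "\<And>j. lev n j (\<Lambda>, k) = ((j-1) div m + 1) * W + d - 1"
    unfolding lev_def h_idx_def W_def d_def m_def by simp
  have r: "r_idx n i = (i-1) mod m + 1" unfolding r_idx_def m_def by simp
  have "(\<Lambda>, k) \<in> LL n i \<inter> BB_u n k \<longleftrightarrow>
     ((\<exists>j. -1 \<le> j \<and> j \<le> i \<and> ((j-1) div m + 1) * W + d - 1 \<le> j) \<and>
          \<not>(\<exists>j. -1 \<le> j \<and> j \<le> i - 1 \<and> ((j-1) div m + 1) * W + d - 1 \<le> j))"
  proof -
    have NNi: "\<And>i'. (\<Lambda>, k) \<in> NN n i' \<longleftrightarrow> (\<exists>j. -1 \<le> j \<and> j \<le> i' \<and> ((j-1) div m + 1) * W + d - 1 \<le> j)"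
      using assms(5) unfolding NN_def by (simp only: lev mem_Collect_eq simp_thms)
    have "(\<Lambda>, k) \<in> BB_u n k" using assms(5) unfolding BB_u_def by simp
    then show ?thesis unfolding LL_def using NNi by blast
  qed
  also have "\<dots> \<longleftrightarrow> (W < (i-1) mod m + 1 \<and> i = ((i-1) div m + 1) * W + d - 1)"
    by (rule key[OF m2 assms(2) d1 W0])
  finally have F: "(\<Lambda>, k) \<in> LL n i \<inter> BB_u n k \<longleftrightarrow> (W < (i-1) mod m + 1 \<and> i = ((i-1) div m + 1) * W + d - 1)" .
  have E1: "WD n (\<Lambda>, k) = W" using W_def by simp
  show ?thesis unfolding E1 r lev[of i] using F W1 by blast
qed

end
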